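(* Let $R$ be a real $n\times n$ payoff matrix, let $S,F$ be $n\times n$ row-stochastic matrices, and for $\lambda\in[0,1]$ set $Q(\lambda)=(1-\lambda)S+\lambda F$, $R(\lambda)=Q(\lambda)RQ(\lambda)^T$ and $\tilde R(\lambda)=R(\lambda)-\mathbf d_{R(\lambda)}\mathbf u^T$, where $\mathbf d_{R(\lambda)}$ is the column vector of diagonal entries of $R(\lambda)$ and $\mathbf u$ is the all-ones column vector. Consider the replicator dynamics on the simplex $\{x\in\mathbb R^n: x_i\ge0,\ \sum_ix_i=1\}$, $$\dot x_i=x_i\big((\tilde R(\lambda)x)_i-x^T\tilde R(\lambda)x\big),\quad i=1,\dots,n,$$ with mean fitness $\phi(x,\lambda)=x^T\tilde R(\lambda)x$. Let $\tilde{\mathbf x}$ be an interior fixed point of these dynamics at parameter value $\lambda^c\in[0,1]$, i.e. $\tilde x_i>0$ for all $i$, and suppose $\lambda^c$ is a balanced bifurcation parameter value of $\tilde{\mathbf x}$, i.e. $\phi(\tilde{\mathbf x},\lambda^c)=0$. Then $\det\tilde R(\lambda^c)=0$.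
   Context: A value $\lambda\in[0,1]$ with $\det\tilde R(\lambda)=0$ is called a singular point of the incompetent game $\tilde R(\lambda)$. $Q(\lambda)$ is the incompetence matrix ($(i,j)$ entry = probability of executing strategy $j$ when strategy $i$ is selected). *)

theory Defs
  imports "HOL-Analysis.Analysis"
begin

definition row_stochastic :: "real^'n^'n \<Rightarrow> bool" where
  "row_stochastic A \<longleftrightarrow> (\<forall>i j. A $ i $ j \<ge> 0) \<and> (\<forall>i. (\<Sum>j\<in>UNIV. A $ i $ j) = 1)"

definition incomp_Q :: "real^'n^'n \<Rightarrow> real^'n^'n \<Rightarrow> real \<Rightarrow> real^'n^'n" where
  "incomp_Q S F l = (1 - l) *\<^sub>R S + l *\<^sub>R F"

definition incomp_R :: "real^'n^'n \<Rightarrow> real^'n^'n \<Rightarrow> real^'n^'n \<Rightarrow> real \<Rightarrow> real^'n^'n" where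
  "incomp_R R S F l = incomp_Q S F l ** R ** transpose (incomp_Q S F l)"

text \<open>Rtilde(lambda) = R(lambda) - d u^T, i.e. entry (i,j) is R(lambda)_ij - R(lambda)_ii.\<close>
definition incomp_Rt :: "real^'n^'n \<Rightarrow> real^'n^'n \<Rightarrow> real^'n^'n \<Rightarrow> real \<Rightarrow> real^'n^'n" where
  "incomp_Rt R S F l = (\<chi> i j. incomp_R R S F l $ i $ j - incomp_R R S F l $ i $ i)"

definition mean_fitness :: "real^'n^'n \<Rightarrow> real^'n^'n \<Rightarrow> real^'n^'n \<Rightarrow> real^'n \<Rightarrow> real \<Rightarrow> real" where
  "mean_fitness R S F x l = x \<bullet> (incomp_Rt R S F l *v x)"

definition replicator_field :: "real^'n^'n \<Rightarrow> real^'n^'n \<Rightarrow> real^'n^'n \<Rightarrow> real \<Rightarrow> real^'n \<Rightarrow> real^'n" where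
  "replicator_field R S F l x =
     (\<chi> i. x $ i * ((incomp_Rt R S F l *v x) $ i - mean_fitness R S F x l))"

definition prob_simplex :: "(real^'n) set" where
  "prob_simplex = {x. (\<forall>i. x $ i \<ge> 0) \<and> (\<Sum>i\<in>UNIV. x $ i) = 1}"

end

theory Submission
  imports Defs
begin

theorem lemma2:
  fixes R S F :: "real^'n^'n" and x :: "real^'n" and lc :: real
  assumes "row_stochastic S" and "row_stochastic F"
    and "0 \<le> lc" and "lc \<le> 1"
    and "x \<in> prob_simplex"
    and "\<forall>i. x $ i > 0"
    and "replicator_field R S F lc x = 0"
    and "mean_fitness R S F x lc = 0"
  shows "det (incomp_Rt R S F lc) = 0"
proof -
  let ?A = "incomp_Rt R S F lc"
  have z: "(?A *v x) $ i = 0" for i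
  proof -
    have "x $ i * ((?A *v x) $ i - mean_fitness R S F x lc) = 0"
      using assms(7) unfolding replicator_field_def vec_eq_iff by simp
    then show ?thesis using assms(6,8) by (metis diff_zero mult_eq_0_iff less_irrefl)
  qed
  have "?A *v x = 0" using z by (simp add: vec_eq_iff)
  moreover obtain i :: 'n where True by blast
  then have "x \<noteq> 0" using assms(6) by (metis less_irrefl zero_index)
  ultimately have "\<not> invertible ?A"
    using matrix_left_invertible_ker invertible_left_inverse by blast
  then show ?thesis using invertible_det_nz by blast
qed

end
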